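(* Assume $C_n>0$ and $\lambda\ge\phi\, n^{1/3}/C_n^{1/3}$ for some constant $\phi>0$. Let $[i_s,i_t]\in\mathcal P$ be a bin of the key partition such that the offline optimal takes the form of Structure 1 or Structure 2 on some sub-interval of $[i_s,i_t]$. Let $\mu_{\mathrm{th}}=\sqrt{\frac{36(B+G)^3C_n^{1/3}\log n}{\phi\, n^{1/3}}}$. If $C_n\le\left(\frac{B^2\phi}{144(B+G)^3\log n}\right)^3 n$, then $$\mathrm{gap}_{\min}(-B,[i_s,i_t])\vee\mathrm{gap}_{\min}(B,[i_s,i_t])\ge\mu_{\mathrm{th}}.$$
   Context: Setting: $n\ge 3$, $B\ge 1$, $G\ge B$, labels $y_1,\dots,y_n\in[-G,G]$; $[a,b]=\{a,\dots,b\}$; $a\vee b=\max\{a,b\}$. Offline optimal: $u_1,\dots,u_n$ is an optimal solution of: minimize $\frac12\sum_{t=1}^n(y_t-\tilde u_t)^2$ subject to $\sum_{t=2}^{n}|\tilde u_t-\tilde u_{t-1}|\le C_n$ and $-B\le\tilde u_t\le B$; with optimal dual variables $\lambda\ge0$ (TV constraint) and $\gamma^\pm_t\ge0$ (box constraints) satisfying the KKT conditions: there are $s_t\in[-1,1]$ with $s_t=\mathrm{sign}(u_{t+1}-u_t)$ whenever $u_{t+1}\ne u_t$, $s_0=s_n=0$, $u_t-y_t=\lambda(s_t-s_{t-1})+\gamma_t^--\gamma_t^+$, and $\lambda(\sum_{t=2}^n|u_t-u_{t-1}|-C_n)=0$, $\gamma_t^-(u_t+B)=0$, $\gamma_t^+(u_t-B)=0$.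 Structure 1 on $[a,b]\subseteq\{2,\dots,n-1\}$: $u_j=u_a\in(-B,B)$ for all $j\in[a,b]$, $u_b>u_{b+1}$ and $u_a>u_{a-1}$. Structure 2 on $[a,b]\subseteq\{2,\dots,n-1\}$: $u_j=u_a\in(-B,B)$ for all $j\in[a,b]$, $u_b<u_{b+1}$ and $u_a<u_{a-1}$. For a bin $[a,b]$ and $\beta\in\mathbb R$, $\mathrm{gap}_{\min}(\beta,[a,b])=\min_{j\in[a,b]}|u_j-\beta|$. Key partition $\mathcal P$: $[n]$ is partitioned greedily into consecutive bins: the first bin starts at $i_s=1$; a bin starting at $i_s$ ends at the largest $i_t\in[i_s,n]$ such that $\sum_{j=i_s+1}^{i_t}|u_j-u_{j-1}|\le B/\sqrt{i_t-i_s+1}$; the next bin starts at $i_t+1$, until $n$ is covered. *)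

theory Defs
  imports Complex_Main
begin

definition tv :: "(nat \<Rightarrow> real) \<Rightarrow> nat \<Rightarrow> nat \<Rightarrow> real" where
  "tv u a b = (\<Sum>j\<in>{a+1..b}. \<bar>u j - u (j - 1)\<bar>)"

definition feasible :: "nat \<Rightarrow> real \<Rightarrow> real \<Rightarrow> (nat \<Rightarrow> real) \<Rightarrow> bool" where
  "feasible n B Cn v \<longleftrightarrow> tv v 1 n \<le> Cn \<and> (\<forall>t\<in>{1..n}. -B \<le> v t \<and> v t \<le> B)"

definition objective :: "nat \<Rightarrow> (nat \<Rightarrow> real) \<Rightarrow> (nat \<Rightarrow> real) \<Rightarrow> real" where
  "objective n y v = (1/2) * (\<Sum>t\<in>{1..n}. (y t - v t)^2)"

definition offline_optimal :: "nat \<Rightarrow> real \<Rightarrow> real \<Rightarrow> (nat \<Rightarrow> real) \<Rightarrow> (nat \<Rightarrow> real) \<Rightarrow> bool" where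
  "offline_optimal n B Cn y u \<longleftrightarrow> feasible n B Cn u \<and>
     (\<forall>v. feasible n B Cn v \<longrightarrow> objective n y u \<le> objective n y v)"

definition KKT :: "nat \<Rightarrow> real \<Rightarrow> real \<Rightarrow> (nat \<Rightarrow> real) \<Rightarrow> (nat \<Rightarrow> real) \<Rightarrow> real
    \<Rightarrow> (nat \<Rightarrow> real) \<Rightarrow> (nat \<Rightarrow> real) \<Rightarrow> (nat \<Rightarrow> real) \<Rightarrow> bool" where
  "KKT n B Cn y u lam gm gp s \<longleftrightarrow>
     lam \<ge> 0 \<and> (\<forall>t\<in>{1..n}. gm t \<ge> 0 \<and> gp t \<ge> 0) \<and>
     (\<forall>t\<in>{0..n}. -1 \<le> s t \<and> s t \<le> 1) \<and>
     (\<forall>t\<in>{1..<n}. u (t+1) \<noteq> u t \<longrightarrow> s t = sgn (u (t+1) - u t)) \<and>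
     s 0 = 0 \<and> s n = 0 \<and>
     (\<forall>t\<in>{1..n}. u t - y t = lam * (s t - s (t - 1)) + gm t - gp t) \<and>
     lam * (tv u 1 n - Cn) = 0 \<and>
     (\<forall>t\<in>{1..n}. gm t * (u t + B) = 0 \<and> gp t * (u t - B) = 0)"

definition structure1 :: "nat \<Rightarrow> real \<Rightarrow> (nat \<Rightarrow> real) \<Rightarrow> nat \<Rightarrow> nat \<Rightarrow> bool" where
  "structure1 n B u a b \<longleftrightarrow> 2 \<le> a \<and> a \<le> b \<and> b \<le> n - 1 \<and>
     (\<forall>j\<in>{a..b}. u j = u a) \<and> -B < u a \<and> u a < B \<and> u b > u (b+1) \<and> u a > u (a - 1)"

definition structure2 :: "nat \<Rightarrow> real \<Rightarrow> (nat \<Rightarrow> real) \<Rightarrow> nat \<Rightarrow> nat \<Rightarrow> bool" where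
  "structure2 n B u a b \<longleftrightarrow> 2 \<le> a \<and> a \<le> b \<and> b \<le> n - 1 \<and>
     (\<forall>j\<in>{a..b}. u j = u a) \<and> -B < u a \<and> u a < B \<and> u b < u (b+1) \<and> u a < u (a - 1)"

definition gap_min :: "(nat \<Rightarrow> real) \<Rightarrow> real \<Rightarrow> nat \<Rightarrow> nat \<Rightarrow> real" where
  "gap_min u \<beta> a b = Min ((\<lambda>j. \<bar>u j - \<beta>\<bar>) ` {a..b})"

definition bin_end :: "nat \<Rightarrow> real \<Rightarrow> (nat \<Rightarrow> real) \<Rightarrow> nat \<Rightarrow> nat" where
  "bin_end n B u a = (GREATEST i. a \<le> i \<and> i \<le> n \<and> tv u a i \<le> B / sqrt (real (i - a + 1)))"

inductive bin_start :: "nat \<Rightarrow> real \<Rightarrow> (nat \<Rightarrow> real) \<Rightarrow> nat \<Rightarrow> bool"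
  for n B u where
  first: "bin_start n B u 1"
| step: "bin_start n B u a \<Longrightarrow> a \<le> n \<Longrightarrow> bin_start n B u (bin_end n B u a + 1)"

definition key_bin :: "nat \<Rightarrow> real \<Rightarrow> (nat \<Rightarrow> real) \<Rightarrow> nat \<Rightarrow> nat \<Rightarrow> bool" where
  "key_bin n B u a b \<longleftrightarrow> bin_start n B u a \<and> a \<le> n \<and> b = bin_end n B u a"

end

theory Submission
  imports Defs
begin

lemma tv_step: "a \<le> k \<Longrightarrow> tv u a (Suc k) = tv u a k + \<bar>u (Suc k) - u k\<bar>"
  unfolding tv_def by (simp add: add.commute)

lemma tv_diff: "j \<le> k \<Longrightarrow> \<bar>u k - u j\<bar> \<le> tv u j k"
proof (induction k rule: dec_induct)
  case base then show ?case by (simp add: tv_def)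
next
  case (step k)
  have "\<bar>u (Suc k) - u j\<bar> \<le> \<bar>u k - u j\<bar> + \<bar>u (Suc k) - u k\<bar>" by linarith
  with step tv_step[of j k u] show ?case by linarith
qed

lemma tv_mono: "a \<le> j \<Longrightarrow> k \<le> b \<Longrightarrow> tv u j k \<le> tv u a b"
  unfolding tv_def by (rule sum_mono2) auto

lemma bin_start_ge1: "bin_start n B u a \<Longrightarrow> 1 \<le> a"
  by (induction rule: bin_start.induct) auto

theorem lemma7:
  fixes n :: nat and B G Cn lam \<phi> :: real
    and y u gm gp s :: "nat \<Rightarrow> real" and i_s i_t :: nat
  assumes "n \<ge> 3" and "B \<ge> 1" and "G \<ge> B"
    and "\<forall>t\<in>{1..n}. -G \<le> y t \<and> y t \<le> G"
    and "offline_optimal n B Cn y u"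
    and "KKT n B Cn y u lam gm gp s"
    and "Cn > 0" and "\<phi> > 0"
    and "lam \<ge> \<phi> * real n powr (1/3) / Cn powr (1/3)"
    and "key_bin n B u i_s i_t"
    and "\<exists>a b. i_s \<le> a \<and> b \<le> i_t \<and> (structure1 n B u a b \<or> structure2 n B u a b)"
    and "Cn \<le> (B^2 * \<phi> / (144 * (B + G)^3 * ln (real n))) ^ 3 * real n"
  shows "max (gap_min u (-B) i_s i_t) (gap_min u B i_s i_t)
           \<ge> sqrt (36 * (B + G)^3 * Cn powr (1/3) * ln (real n) / (\<phi> * real n powr (1/3)))"
proof -
  let ?P = "\<lambda>i. i_s \<le> i \<and> i \<le> n \<and> tv u i_s i \<le> B / sqrt (real (i - i_s + 1))"
  have kb: "bin_start n B u i_s" "i_s \<le> n" "i_t = bin_end n B u i_s"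
    using assms(10) unfolding key_bin_def by auto
  have s1: "1 \<le> i_s" using bin_start_ge1[OF kb(1)] .
  have P0: "?P i_s" using kb assms(2) by (simp add: tv_def)
  have Pt: "?P i_t" unfolding kb(3) bin_end_def
    by (rule GreatestI_nat[of _ i_s n]) (use P0 in auto)
  have sq: "sqrt (real (i_t - i_s + 1)) \<ge> 1" by simp
  have "B / sqrt (real (i_t - i_s + 1)) \<le> B"
    using sq assms(2) by (simp add: divide_le_eq)
  with Pt have tvB: "tv u i_s i_t \<le> B" by linarith
  have box: "\<And>j. j \<in> {1..n} \<Longrightarrow> -B \<le> u j \<and> u j \<le> B"
    using assms(5) unfolding offline_optimal_def feasible_def by auto
  have fin: "finite ((\<lambda>j. \<bar>u j - (-B)\<bar>) ` {i_s..i_t})" "((\<lambda>j. \<bar>u j - (-B)\<bar>) ` {i_s..i_t}) \<noteq> {}"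
    "finite ((\<lambda>j. \<bar>u j - B\<bar>) ` {i_s..i_t})" "((\<lambda>j. \<bar>u j - B\<bar>) ` {i_s..i_t}) \<noteq> {}"
    using Pt by auto
  obtain j1 where j1: "j1 \<in> {i_s..i_t}" "gap_min u (-B) i_s i_t = \<bar>u j1 - (-B)\<bar>"
    using Min_in[OF fin(1,2)] unfolding gap_min_def by auto
  obtain j2 where j2: "j2 \<in> {i_s..i_t}" "gap_min u B i_s i_t = \<bar>u j2 - B\<bar>"
    using Min_in[OF fin(3,4)] unfolding gap_min_def by auto
  have d: "\<bar>u j2 - u j1\<bar> \<le> B"
  proof (cases "j1 \<le> j2")
    case True
    have "\<bar>u j2 - u j1\<bar> \<le> tv u j1 j2" using tv_diff[OF True] .
    also have "\<dots> \<le> tv u i_s i_t" using j1 j2 by (intro tv_mono) auto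
    finally show ?thesis using tvB by linarith
  next
    case False
    have "\<bar>u j1 - u j2\<bar> \<le> tv u j2 j1" using False by (intro tv_diff) auto
    also have "\<dots> \<le> tv u i_s i_t" using j1 j2 by (intro tv_mono) auto
    finally show ?thesis using tvB by linarith
  qed
  have "max (gap_min u (-B) i_s i_t) (gap_min u B i_s i_t) \<ge> B / 2"
    using j1(2) j2(2) d by linarith
  moreover have "sqrt (36 * (B + G)^3 * Cn powr (1/3) * ln (real n) / (\<phi> * real n powr (1/3))) \<le> B / 2"
  proof -
    have ln: "ln (real n) > 0" using assms(1) by simp
    have BG: "(B + G)^3 > 0" using assms(2,3) by simp
    define X where "X = B^2 * \<phi> / (144 * (B + G)^3 * ln (real n))"
    have X: "X > 0" unfolding X_def using ln BG assms(2,8) by simp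
    have "Cn powr (1/3) \<le> (X^3 * real n) powr (1/3)"
      using assms(12,7) unfolding X_def[symmetric] by (intro powr_mono2) auto
    also have "\<dots> = X * real n powr (1/3)"
    proof -
      have "(X^3 * real n) powr (1/3) = (X^3) powr (1/3) * real n powr (1/3)"
        using X by (intro powr_mult)
      moreover have "(X^3) powr (1/3) = X"
      proof -
        have "(X^3) = X powr 3" using X by (simp add: powr_realpow)
        then have "(X^3) powr (1/3) = X powr (3 * (1/3))" by (simp add: powr_powr)
        then show ?thesis using X by simp
      qed
      ultimately show ?thesis by simp
    qed
    finally have c: "Cn powr (1/3) \<le> X * real n powr (1/3)" .
    have np: "real n powr (1/3) > 0" using assms(1) by simp
    have "36 * (B + G)^3 * Cn powr (1/3) * ln (real n) \<le> 36 * (B + G)^3 * (X * real n powr (1/3)) * ln (real n)"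
      using c BG ln by (intro mult_right_mono mult_left_mono) auto
    also have "\<dots> = (B/2)^2 * (\<phi> * real n powr (1/3))"
      unfolding X_def using BG ln by (simp add: field_simps power2_eq_square)
    finally have "36 * (B + G)^3 * Cn powr (1/3) * ln (real n) / (\<phi> * real n powr (1/3)) \<le> (B/2)^2"
      using np assms(8) by (simp add: divide_le_eq)
    then show ?thesis using assms(2) by (intro real_le_lsqrt) auto
  qed
  ultimately show ?thesis by linarith
qed

end
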